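(* Let $\mathbb F_\Theta$ be a real flag manifold associated to a split real form. There exists an $M$-invariant complex structure $J$ on $T_{b_\Theta}\mathbb F_\Theta\cong\mathfrak n_\Theta^-$ if and only if every $M$-equivalence class $[\alpha]$ contained in $\Pi^-\setminus\langle\Theta\rangle^-$ has an even number of elements. In this case the $M$-invariant complex structures are exactly the direct sums of complex structures on the subspaces $V_{[\alpha]}=\sum_{\beta\sim_M\alpha}\mathfrak g_\beta\subset\mathfrak n_\Theta^-$, and on each $V_{[\alpha]}$ the set of $M$-invariant complex structures is parametrized by $\mathrm{GL}(d,\mathbb R)/\mathrm{GL}(d/2,\mathbb C)$, where $d=\dim V_{[\alpha]}$.
   Context: Let $\mathfrak g$ be the split real form of a complex simple Lie algebra, with Iwasawa decomposition $\mathfrak g=\mathfrak k\oplus\mathfrak a\oplus\mathfrak n$, roots $\Pi$ of $(\mathfrak g,\mathfrak a)$ (root spaces $\mathfrak g_\alpha$ one-dimensional), positive roots $\Pi^+$ (those in $\mathfrak n$), $\Pi^-=-\Pi^+$, simple roots $\Sigma$. For $\Theta\subset\Sigma$, $\langle\Theta\rangle^\pm$ are the positive/negative roots that are combinations of elements of $\Theta$, $\mathfrak p_\Theta=\mathfrak a\oplus\sum_{\alpha\in\Pi^+}\mathfrak g_\alpha\oplus\sum_{\alpha\in\langle\Theta\rangle^-}\mathfrak g_\alpha$, $G$ the inner automorphism group of $\mathfrak g$, $K$ its maximal compact subgroup (generated by $\exp\mathrm{ad}(\mathfrak k)$), $P_\Theta$ the normalizer of $\mathfrak p_\Theta$ in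 $G$, $K_\Theta=K\cap P_\Theta$, $\mathbb F_\Theta=G/P_\Theta=K/K_\Theta$ with origin $b_\Theta$. The tangent space $T_{b_\Theta}\mathbb F_\Theta$ is identified, $K_\Theta$-equivariantly, with $\mathfrak n_\Theta^-=\sum_{\alpha\in\Pi^-\setminus\langle\Theta\rangle^-}\mathfrak g_\alpha$ with $K_\Theta$ acting by the adjoint action. $M$ is the centralizer of $\mathfrak a$ in $K$ (a finite group acting on each $\mathfrak g_\alpha$ by $\pm1$). Two roots $\alpha,\beta$ are $M$-equivalent, $\alpha\sim_M\beta$, if the representations of $M$ on $\mathfrak g_\alpha$ and $\mathfrak g_\beta$ are equivalent; $[\alpha]$ denotes the class. A complex structure $J$ is $M$-invariant if $J\,\mathrm{Ad}(m)=\mathrm{Ad}(m)\,J$ for all $m\in M$. *)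

theory Defs
  imports Complex_Main "Jordan_Normal_Form.Matrix"
begin

(* Model of T_{b_Theta} F_Theta = n_Theta^- in the basis given by one chosen nonzero vector
   X_alpha of each (one-dimensional) root space g_alpha, alpha \<in> Pi^- - <Theta>^-.
   The roots in Pi^- - <Theta>^- form the finite type 'r.
   A real linear operator on n_Theta^- is its matrix J :: 'r \<Rightarrow> 'r \<Rightarrow> real in this basis
   (J X_j = \<Sum>i. J i j X_i).
   M acts on g_alpha by the sign chi m alpha \<in> {1,-1}, i.e. Ad(m) is the diagonal matrix
   diag(chi m alpha). *)

definition mat_mul :: "('r::finite \<Rightarrow> 'r \<Rightarrow> real) \<Rightarrow> ('r \<Rightarrow> 'r \<Rightarrow> real) \<Rightarrow> 'r \<Rightarrow> 'r \<Rightarrow> real" where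
  "mat_mul A B = (\<lambda>i k. \<Sum>j\<in>UNIV. A i j * B j k)"

definition Ad_M :: "('m \<Rightarrow> 'r \<Rightarrow> real) \<Rightarrow> 'm \<Rightarrow> 'r \<Rightarrow> 'r \<Rightarrow> real" where
  "Ad_M chi m = (\<lambda>i j. if i = j then chi m i else 0)"

definition complex_structure :: "('r::finite \<Rightarrow> 'r \<Rightarrow> real) \<Rightarrow> bool" where
  "complex_structure J \<longleftrightarrow> mat_mul J J = (\<lambda>i k. if i = k then -1 else 0)"

definition M_invariant :: "'m set \<Rightarrow> ('m \<Rightarrow> 'r \<Rightarrow> real) \<Rightarrow> ('r::finite \<Rightarrow> 'r \<Rightarrow> real) \<Rightarrow> bool" where
  "M_invariant M chi J \<longleftrightarrow> (\<forall>m\<in>M. mat_mul J (Ad_M chi m) = mat_mul (Ad_M chi m) J)"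

(* M-equivalence: the one-dimensional representations of M on g_alpha, g_beta are
   equivalent iff their characters coincide *)
definition M_equiv :: "'m set \<Rightarrow> ('m \<Rightarrow> 'r \<Rightarrow> real) \<Rightarrow> 'r \<Rightarrow> 'r \<Rightarrow> bool" where
  "M_equiv M chi a b \<longleftrightarrow> (\<forall>m\<in>M. chi m a = chi m b)"

definition M_class :: "'m set \<Rightarrow> ('m \<Rightarrow> 'r \<Rightarrow> real) \<Rightarrow> 'r \<Rightarrow> 'r set" where
  "M_class M chi a = {b. M_equiv M chi b a}"

definition direct_sum_of_class_cs :: "'m set \<Rightarrow> ('m \<Rightarrow> 'r \<Rightarrow> real) \<Rightarrow> ('r::finite \<Rightarrow> 'r \<Rightarrow> real) \<Rightarrow> bool" where
  "direct_sum_of_class_cs M chi J \<longleftrightarrow>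
     (\<forall>i j. \<not> M_equiv M chi i j \<longrightarrow> J i j = 0) \<and>
     (\<forall>a. \<forall>i\<in>M_class M chi a. \<forall>k\<in>M_class M chi a.
        (\<Sum>j\<in>M_class M chi a. J i j * J j k) = (if i = k then -1 else 0))"

(* M-invariant complex structures on V_C (C a class), as matrices indexed by C x C,
   extended by 0 outside C x C *)
definition class_cs :: "'m set \<Rightarrow> ('m \<Rightarrow> 'r \<Rightarrow> real) \<Rightarrow> 'r set \<Rightarrow> ('r \<Rightarrow> 'r \<Rightarrow> real) set" where
  "class_cs M chi C = {K. (\<forall>i j. (i \<notin> C \<or> j \<notin> C) \<longrightarrow> K i j = 0) \<and>
       (\<forall>i\<in>C. \<forall>k\<in>C. (\<Sum>j\<in>C. K i j * K j k) = (if i = k then -1 else 0)) \<and>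
       (\<forall>m\<in>M. \<forall>i\<in>C. \<forall>k\<in>C. K i k * chi m k = chi m i * K i k)}"

definition GL_real :: "nat \<Rightarrow> real mat set" where
  "GL_real n = {A. A \<in> carrier_mat n n \<and> invertible_mat A}"

definition GL_complex :: "nat \<Rightarrow> complex mat set" where
  "GL_complex n = {Z. Z \<in> carrier_mat n n \<and> invertible_mat Z}"

definition mat_inv :: "'a::semiring_1 mat \<Rightarrow> 'a mat" where
  "mat_inv A = (SOME B. inverts_mat A B \<and> inverts_mat B A)"

definition J_std :: "nat \<Rightarrow> real mat" where
  "J_std k = four_block_mat (0\<^sub>m k k) (- 1\<^sub>m k) (1\<^sub>m k) (0\<^sub>m k k)"

definition realify :: "complex mat \<Rightarrow> real mat" where
  "realify Z = four_block_mat (map_mat Re Z) (- map_mat Im Z) (map_mat Im Z) (map_mat Re Z)"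

(* transport a d x d matrix to an operator on V_C via an enumeration e : {0..<d} -> C
   of the root basis of V_C (extended by 0 outside C x C) *)
definition transport :: "(nat \<Rightarrow> 'r) \<Rightarrow> nat \<Rightarrow> real mat \<Rightarrow> 'r \<Rightarrow> 'r \<Rightarrow> real" where
  "transport e d A = (\<lambda>i j. if i \<in> e ` {0..<d} \<and> j \<in> e ` {0..<d}
        then A $$ (the_inv_into {0..<d} e i, the_inv_into {0..<d} e j) else 0)"

definition param :: "(nat \<Rightarrow> 'r) \<Rightarrow> nat \<Rightarrow> real mat \<Rightarrow> 'r \<Rightarrow> 'r \<Rightarrow> real" where
  "param e d A = transport e d (A * J_std (d div 2) * mat_inv A)"

end

theory Submission
  imports Defs "Jordan_Normal_Form.Determinant"
begin

lemma equiv_refl: "M_equiv M chi a a" by (simp add: M_equiv_def)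
lemma equiv_sym: "M_equiv M chi a b \<Longrightarrow> M_equiv M chi b a" by (simp add: M_equiv_def)
lemma equiv_trans: "M_equiv M chi a b \<Longrightarrow> M_equiv M chi b c \<Longrightarrow> M_equiv M chi a c"
  by (simp add: M_equiv_def)
lemma in_class: "i \<in> M_class M chi a \<longleftrightarrow> M_equiv M chi i a" by (simp add: M_class_def)
lemma class_eq: "i \<in> M_class M chi a \<Longrightarrow> M_class M chi i = M_class M chi a"
  unfolding M_class_def by (auto intro: equiv_trans equiv_sym)

lemma sum_delta_r: "(\<Sum>j\<in>(UNIV::'r::finite set). J j * (if j = k then c j else 0)) = J k * (c k :: real)"
proof -
  have "(\<Sum>j\<in>(UNIV::'r set). J j * (if j = k then c j else 0)) = (\<Sum>j\<in>UNIV. if j = k then J j * c j else 0)"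
    by (rule sum.cong) auto
  also have "\<dots> = J k * c k" by simp
  finally show ?thesis .
qed

lemma sum_delta_l: "(\<Sum>j\<in>(UNIV::'r::finite set). (if i = j then c i else 0) * J j) = (c i :: real) * J i"
proof -
  have "(\<Sum>j\<in>(UNIV::'r set). (if i = j then c i else 0) * J j) = (\<Sum>j\<in>UNIV. if j = i then c i * J j else 0)"
    by (rule sum.cong) auto
  also have "\<dots> = c i * J i" by simp
  finally show ?thesis .
qed

lemma inv_iff:
  fixes chi :: "'m \<Rightarrow> 'r::finite \<Rightarrow> real"
  assumes signs: "\<forall>m\<in>M. \<forall>a. chi m a = 1 \<or> chi m a = -1"
  shows "M_invariant M chi J \<longleftrightarrow> (\<forall>i j. \<not> M_equiv M chi i j \<longrightarrow> J i j = 0)"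
proof -
  have e1: "\<And>m i k. mat_mul J (Ad_M chi m) i k = J i k * chi m k"
    unfolding mat_mul_def Ad_M_def using sum_delta_r[of "\<lambda>j. J _ j" _ "chi _"] by simp
  have e2: "\<And>m i k. mat_mul (Ad_M chi m) J i k = chi m i * J i k"
    unfolding mat_mul_def Ad_M_def using sum_delta_l[of _ "chi _" "\<lambda>j. J j _"] by simp
  have key: "M_invariant M chi J \<longleftrightarrow> (\<forall>m\<in>M. \<forall>i k. J i k * chi m k = chi m i * J i k)"
    unfolding M_invariant_def fun_eq_iff e1 e2 by simp
  show ?thesis
  proof
    assume "M_invariant M chi J"
    hence h: "\<forall>m\<in>M. \<forall>i k. J i k * chi m k = chi m i * J i k" using key by simp
    show "\<forall>i j. \<not> M_equiv M chi i j \<longrightarrow> J i j = 0"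
    proof (intro allI impI)
      fix i j assume "\<not> M_equiv M chi i j"
      then obtain m where m: "m \<in> M" "chi m i \<noteq> chi m j" unfolding M_equiv_def by auto
      have "J i j * (chi m j - chi m i) = 0" using h m(1) by (simp add: algebra_simps)
      thus "J i j = 0" using m by simp
    qed
  next
    assume h: "\<forall>i j. \<not> M_equiv M chi i j \<longrightarrow> J i j = 0"
    have "\<forall>m\<in>M. \<forall>i k. J i k * chi m k = chi m i * J i k"
    proof (intro ballI allI)
      fix m i k assume m: "m \<in> M"
      show "J i k * chi m k = chi m i * J i k"
      proof (cases "M_equiv M chi i k")
        case True thus ?thesis using m unfolding M_equiv_def by simp
      next
        case False thus ?thesis using h by simp
      qed
    qed
    thus "M_invariant M chi J" using key by simp
  qed
qed

lemma sum_class: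
  fixes chi :: "'m \<Rightarrow> 'r::finite \<Rightarrow> real" and J :: "'r \<Rightarrow> 'r \<Rightarrow> real"
  assumes h: "\<forall>i j. \<not> M_equiv M chi i j \<longrightarrow> J i j = 0" and i: "M_equiv M chi i a"
  shows "(\<Sum>j\<in>UNIV. J i j * J j k) = (\<Sum>j\<in>M_class M chi a. J i j * J j k)"
proof -
  have "(\<Sum>j\<in>UNIV. J i j * J j k) = (\<Sum>j\<in>M_class M chi a. J i j * J j k) + (\<Sum>j\<in>UNIV - M_class M chi a. J i j * J j k)"
    using sum.subset_diff[of "M_class M chi a" UNIV "\<lambda>j. J i j * J j k"] by (simp add: add.commute)
  moreover have "(\<Sum>j\<in>UNIV - M_class M chi a. J i j * J j k) = 0"
  proof (rule sum.neutral, intro ballI)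
    fix j assume "j \<in> UNIV - M_class M chi a"
    hence "\<not> M_equiv M chi i j" using i unfolding M_class_def by (auto intro: equiv_trans equiv_sym)
    thus "J i j * J j k = 0" using h by simp
  qed
  ultimately show ?thesis by simp
qed

lemma dsum_iff:
  fixes chi :: "'m \<Rightarrow> 'r::finite \<Rightarrow> real" and J :: "'r \<Rightarrow> 'r \<Rightarrow> real"
  assumes signs: "\<forall>m\<in>M. \<forall>a. chi m a = 1 \<or> chi m a = -1"
  shows "(complex_structure J \<and> M_invariant M chi J) \<longleftrightarrow> direct_sum_of_class_cs M chi J"
proof
  assume a: "complex_structure J \<and> M_invariant M chi J"
  hence h: "\<forall>i j. \<not> M_equiv M chi i j \<longrightarrow> J i j = 0" using inv_iff[OF signs] by blast
  have cs0: "\<And>i k. mat_mul J J i k = (if i = k then -1 else 0)"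
    using a unfolding complex_structure_def by simp
  have cs: "\<And>i k. (\<Sum>j\<in>UNIV. J i j * J j k) = (if i = k then -1 else 0)"
    using cs0 unfolding mat_mul_def .
  have "\<forall>a. \<forall>i\<in>M_class M chi a. \<forall>k\<in>M_class M chi a.
        (\<Sum>j\<in>M_class M chi a. J i j * J j k) = (if i = k then -1 else 0)"
  proof (intro allI ballI)
    fix a i k assume i: "i \<in> M_class M chi a" and k: "k \<in> M_class M chi a"
    have "M_equiv M chi i a" using i by (simp add: in_class)
    from sum_class[OF h this, of k] cs[of i k]
    show "(\<Sum>j\<in>M_class M chi a. J i j * J j k) = (if i = k then -1 else 0)" by simp
  qed
  thus "direct_sum_of_class_cs M chi J"
    unfolding direct_sum_of_class_cs_def using h by blast
next
  assume d: "direct_sum_of_class_cs M chi J"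
  hence h: "\<forall>i j. \<not> M_equiv M chi i j \<longrightarrow> J i j = 0" unfolding direct_sum_of_class_cs_def by blast
  have d2: "\<And>a i k. i \<in> M_class M chi a \<Longrightarrow> k \<in> M_class M chi a \<Longrightarrow>
        (\<Sum>j\<in>M_class M chi a. J i j * J j k) = (if i = k then -1 else 0)"
    using d unfolding direct_sum_of_class_cs_def by blast
  have "M_invariant M chi J" using inv_iff[OF signs] h by blast
  moreover have "complex_structure J"
    unfolding complex_structure_def mat_mul_def
  proof (intro ext)
    fix i k
    show "(\<Sum>j\<in>UNIV. J i j * J j k) = (if i = k then -1 else 0)"
    proof (cases "M_equiv M chi i k")
      case True
      have "(\<Sum>j\<in>UNIV. J i j * J j k) = (\<Sum>j\<in>M_class M chi k. J i j * J j k)"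
        by (rule sum_class[OF h True])
      also have "\<dots> = (if i = k then -1 else 0)"
        by (rule d2) (simp_all add: in_class True equiv_refl)
      finally show ?thesis .
    next
      case False
      have "(\<Sum>j\<in>UNIV. J i j * J j k) = 0"
      proof (rule sum.neutral, intro ballI)
        fix j
        show "J i j * J j k = 0"
        proof (cases "M_equiv M chi i j")
          case True
          have "\<not> M_equiv M chi j k"
          proof
            assume "M_equiv M chi j k"
            with True have "M_equiv M chi i k" by (rule equiv_trans)
            with False show False by simp
          qed
          thus ?thesis using h by simp
        next
          case False thus ?thesis using h by simp
        qed
      qed
      moreover have "i \<noteq> k" using False equiv_refl by metis
      ultimately show ?thesis by simp
    qed
  qed
  ultimately show "complex_structure J \<and> M_invariant M chi J" by simp
qed

lemma tr_inv: assumes b: "bij_betw e {0..<(d::nat)} C" and i: "i \<in> C"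
  shows "the_inv_into {0..<d} e i < d" "e (the_inv_into {0..<d} e i) = i"
proof -
  have inj: "inj_on e {0..<d}" and im: "e ` {0..<d} = C" using bij_betw_imp_inj_on[OF b] bij_betw_imp_surj_on[OF b] by blast+
  have ii: "i \<in> e ` {0..<d}" using i im by simp
  have "the_inv_into {0..<d} e i \<in> {0..<d}" by (rule the_inv_into_into[OF inj ii subset_refl])
  thus "the_inv_into {0..<d} e i < d" by simp
  show "e (the_inv_into {0..<d} e i) = i" by (rule f_the_inv_into_f[OF inj ii])
qed

lemma tr_e: assumes b: "bij_betw e {0..<(d::nat)} C" and p: "p < d"
  shows "the_inv_into {0..<d} e (e p) = p" "e p \<in> C"
proof -
  have inj: "inj_on e {0..<d}" and im: "e ` {0..<d} = C" using bij_betw_imp_inj_on[OF b] bij_betw_imp_surj_on[OF b] by blast+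
  show "the_inv_into {0..<d} e (e p) = p" using the_inv_into_f_f[OF inj, of p] p by simp
  show "e p \<in> C" using im p by auto
qed

lemma tr_index: assumes b: "bij_betw e {0..<(d::nat)} C" and p: "p < d" and q: "q < d"
  shows "transport e d A (e p) (e q) = A $$ (p, q)"
  unfolding transport_def using tr_e[OF b p] tr_e[OF b q] p q by auto

lemma tr_index2: assumes b: "bij_betw e {0..<(d::nat)} C" and i: "i \<in> C" and k: "k \<in> C"
  shows "transport e d A i k = A $$ (the_inv_into {0..<d} e i, the_inv_into {0..<d} e k)"
proof -
  have "transport e d A (e (the_inv_into {0..<d} e i)) (e (the_inv_into {0..<d} e k))
     = A $$ (the_inv_into {0..<d} e i, the_inv_into {0..<d} e k)"
    by (rule tr_index[OF b tr_inv(1)[OF b i] tr_inv(1)[OF b k]])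
  thus ?thesis unfolding tr_inv(2)[OF b i] tr_inv(2)[OF b k] .
qed

lemma tr_out: assumes b: "bij_betw e {0..<(d::nat)} C" and ij: "i \<notin> C \<or> j \<notin> C"
  shows "transport e d A i j = 0"
  using b ij unfolding transport_def bij_betw_def by auto

lemma tr_sum: assumes b: "bij_betw e {0..<(d::nat)} C" and A: "A \<in> carrier_mat d d" and B: "B \<in> carrier_mat d d"
  and i: "i \<in> C" and k: "k \<in> C"
  shows "(\<Sum>j\<in>C. transport e d A i j * transport e d B j k) = (A * B) $$ (the_inv_into {0..<d} e i, the_inv_into {0..<d} e k)"
proof -
  let ?g = "the_inv_into {0..<d} e"
  have "(\<Sum>j\<in>C. transport e d A i j * transport e d B j k) = (\<Sum>p\<in>{0..<d}. transport e d A i (e p) * transport e d B (e p) k)"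
    using sum.reindex_bij_betw[OF b, of "\<lambda>j. transport e d A i j * transport e d B j k"] by simp
  also have "\<dots> = (\<Sum>p\<in>{0..<d}. A $$ (?g i, p) * B $$ (p, ?g k))"
  proof (rule sum.cong[OF refl])
    fix p assume p: "p \<in> {0..<d}"
    show "transport e d A i (e p) * transport e d B (e p) k = A $$ (?g i, p) * B $$ (p, ?g k)"
    proof -
      have p': "p < d" using p by simp
      show ?thesis unfolding tr_index2[OF b i tr_e(2)[OF b p']] tr_index2[OF b tr_e(2)[OF b p'] k] tr_e(1)[OF b p'] ..
    qed
  qed
  also have "\<dots> = (A * B) $$ (?g i, ?g k)"
    using A B tr_inv(1)[OF b i] tr_inv(1)[OF b k] by (simp add: scalar_prod_def)
  finally show ?thesis .
qed

lemma tr_back: assumes b: "bij_betw e {0..<(d::nat)} C" and z: "\<forall>i j. (i \<notin> C \<or> j \<notin> C) \<longrightarrow> K i j = 0"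
  shows "transport e d (mat d d (\<lambda>(p,q). K (e p) (e q))) = K"
proof (intro ext)
  fix i j
  show "transport e d (mat d d (\<lambda>(p,q). K (e p) (e q))) i j = K i j"
  proof (cases "i \<in> C \<and> j \<in> C")
    case True
    hence i: "i \<in> C" and j: "j \<in> C" by auto
    have "mat d d (\<lambda>(p,q). K (e p) (e q)) $$ (the_inv_into {0..<d} e i, the_inv_into {0..<d} e j)
       = K (e (the_inv_into {0..<d} e i)) (e (the_inv_into {0..<d} e j))"
      by (rule index_mat(1)[THEN trans], use tr_inv(1)[OF b i] tr_inv(1)[OF b j] in auto)
    thus ?thesis unfolding tr_index2[OF b i j] tr_inv(2)[OF b i] tr_inv(2)[OF b j] .
  next
    case False thus ?thesis using tr_out[OF b] z by auto
  qed
qed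

lemma tr_inj: assumes b: "bij_betw e {0..<(d::nat)} C" and A: "A \<in> carrier_mat d d" and B: "B \<in> carrier_mat d d"
  and eq: "transport e d A = transport e d B" shows "A = B"
proof (rule eq_matI)
  fix p q assume "p < dim_row B" "q < dim_col B"
  hence p: "p < d" and q: "q < d" using B by auto
  have "A $$ (p, q) = transport e d A (e p) (e q)" by (rule tr_index[OF b p q, symmetric])
  also have "\<dots> = transport e d B (e p) (e q)" unfolding eq ..
  also have "\<dots> = B $$ (p, q)" by (rule tr_index[OF b p q])
  finally show "A $$ (p, q) = B $$ (p, q)" .
qed (use A B in auto)

lemma mat_inv_props: assumes A: "A \<in> carrier_mat n n" and inv: "invertible_mat A"
  shows "mat_inv A \<in> carrier_mat n n" "A * mat_inv A = 1\<^sub>m n" "mat_inv A * A = 1\<^sub>m n"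
proof -
  have ex: "\<exists>B. inverts_mat A B \<and> inverts_mat B A" using inv unfolding invertible_mat_def by blast
  have s: "inverts_mat A (mat_inv A) \<and> inverts_mat (mat_inv A) A"
    unfolding mat_inv_def by (rule someI_ex[OF ex])
  let ?B = "mat_inv A"
  have 1: "A * ?B = 1\<^sub>m n" using s A unfolding inverts_mat_def by simp
  have 2: "?B * A = 1\<^sub>m (dim_row ?B)" using s unfolding inverts_mat_def by simp
  have c: "dim_col ?B = n" using arg_cong[OF 1, of dim_col] by simp
  have r: "dim_row ?B = n" using arg_cong[OF 2, of dim_col] A by simp
  show "?B \<in> carrier_mat n n" using c r by auto
  show "A * ?B = 1\<^sub>m n" by (rule 1)
  show "?B * A = 1\<^sub>m n" using 2 r by simp
qed

lemma invertibleI: assumes A: "A \<in> carrier_mat n n" and B: "B \<in> carrier_mat n n" and AB: "A * B = 1\<^sub>m n"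
  shows "invertible_mat (A :: 'a :: field mat)"
proof -
  have BA: "B * A = 1\<^sub>m n" by (rule mat_mult_left_right_inverse[OF A B AB])
  show ?thesis unfolding invertible_mat_def inverts_mat_def square_mat.simps using A B AB BA by auto
qed

lemma det_invertible: assumes A: "A \<in> carrier_mat n n" and d: "det A \<noteq> (0 :: 'a :: field)"
  shows "invertible_mat A"
proof -
  have "A \<in> Units (ring_mat TYPE('a) n ())" by (rule det_non_zero_imp_unit[OF A d])
  then obtain B where B: "B \<in> carrier_mat n n" "A * B = 1\<^sub>m n"
    unfolding Units_def ring_mat_simps by auto
  show ?thesis by (rule invertibleI[OF A B])
qed

lemma kernel_exists:
  fixes N :: "nat \<Rightarrow> nat \<Rightarrow> real"
  assumes nm: "n < m"
  shows "\<exists>x. (\<exists>i<m. x i \<noteq> 0) \<and> (\<forall>r<n. (\<Sum>c<m. N r c * x c) = 0)"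
proof -
  define f where "f = (\<lambda>i. if i = n then 0\<^sub>v m else vec m (\<lambda>c. if i < n then N i c else 0))"
  define Mm where "Mm = mat\<^sub>r m m f"
  have Mc: "Mm \<in> carrier_mat m m" unfolding Mm_def by simp
  have "det (mat\<^sub>r m m (\<lambda>i. if i = n then 0\<^sub>v m else vec m (\<lambda>c. if i < n then N i c else 0))) = 0"
    by (rule det_row_0[OF nm], auto)
  hence "det Mm = 0" unfolding Mm_def f_def .
  then obtain v where v: "v \<in> carrier_vec m" "v \<noteq> 0\<^sub>v m" "Mm *\<^sub>v v = 0\<^sub>v m"
    using det_0_iff_vec_prod_zero_field[OF Mc] by blast
  have nz: "\<exists>i<m. v $ i \<noteq> 0"
  proof (rule ccontr)
    assume "\<not> (\<exists>i<m. v $ i \<noteq> 0)"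
    hence "v = 0\<^sub>v m" using v(1) by (intro eq_vecI) auto
    with v(2) show False by simp
  qed
  have "\<forall>r<n. (\<Sum>c<m. N r c * v $ c) = 0"
  proof (intro allI impI)
    fix r assume r: "r < n"
    have rm: "r < m" using r nm by simp
    have "0 = (Mm *\<^sub>v v) $ r" using v(3) rm by simp
    also have "\<dots> = (\<Sum>c\<in>{0..<m}. Mm $$ (r, c) * v $ c)"
      using rm Mc v(1) by (simp add: scalar_prod_def)
    also have "\<dots> = (\<Sum>c<m. N r c * v $ c)"
      by (rule sum.cong) (use r rm in \<open>auto simp: Mm_def f_def\<close>)
    finally show "(\<Sum>c<m. N r c * v $ c) = 0" by simp
  qed
  thus ?thesis using nz by blast
qed

definition Kap :: "real mat \<Rightarrow> nat \<Rightarrow> (nat \<Rightarrow> real) \<Rightarrow> nat \<Rightarrow> real" where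
  "Kap K d x = (\<lambda>r. \<Sum>l<d. K $$ (r, l) * x l)"
definition dotp :: "nat \<Rightarrow> (nat \<Rightarrow> real) \<Rightarrow> (nat \<Rightarrow> real) \<Rightarrow> real" where
  "dotp d x y = (\<Sum>r<d. x r * y r)"
definition lc :: "real mat \<Rightarrow> nat \<Rightarrow> (nat \<Rightarrow> real) list \<Rightarrow> (nat \<Rightarrow> real) \<Rightarrow> (nat \<Rightarrow> real) \<Rightarrow> nat \<Rightarrow> real" where
  "lc K d vs a b = (\<lambda>r. \<Sum>i<length vs. a i * (vs!i) r + b i * Kap K d (vs!i) r)"
definition good :: "real mat \<Rightarrow> nat \<Rightarrow> (nat \<Rightarrow> real) list \<Rightarrow> bool" where
  "good K d vs = (\<forall>a b. (\<forall>r<d. lc K d vs a b r = 0) \<longrightarrow> (\<forall>i<length vs. a i = 0 \<and> b i = 0))"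

lemma Kap_cong: "(\<And>l. l < d \<Longrightarrow> x l = y l) \<Longrightarrow> Kap K d x r = Kap K d y r"
  unfolding Kap_def by (rule sum.cong) auto

lemma Kap_lin: "Kap K d (\<lambda>r. \<Sum>i<n. a i * f i r + b i * g i r) r = (\<Sum>i<n. a i * Kap K d (f i) r + b i * Kap K d (g i) r)"
proof -
  have "Kap K d (\<lambda>r. \<Sum>i<n. a i * f i r + b i * g i r) r = (\<Sum>l<d. \<Sum>i<n. K $$ (r, l) * (a i * f i l + b i * g i l))"
    unfolding Kap_def by (simp add: sum_distrib_left)
  also have "\<dots> = (\<Sum>i<n. \<Sum>l<d. K $$ (r, l) * (a i * f i l + b i * g i l))" by (rule sum.swap)
  also have "\<dots> = (\<Sum>i<n. a i * Kap K d (f i) r + b i * Kap K d (g i) r)"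
    unfolding Kap_def by (simp add: sum_distrib_left sum.distrib algebra_simps)
  finally show ?thesis .
qed

lemma Kap_lin3: "Kap K d (\<lambda>r. s r + a * u r + b * w r) r = Kap K d s r + a * Kap K d u r + b * Kap K d w r"
  unfolding Kap_def by (simp add: sum_distrib_left sum.distrib algebra_simps)

lemma Kap_KK: assumes K: "K \<in> carrier_mat d d" and KK: "K * K = - 1\<^sub>m d" and r: "r < d"
  shows "Kap K d (Kap K d x) r = - x r"
proof -
  have "Kap K d (Kap K d x) r = (\<Sum>l<d. \<Sum>m<d. K $$ (r, l) * (K $$ (l, m) * x m))"
    unfolding Kap_def by (simp add: sum_distrib_left)
  also have "\<dots> = (\<Sum>m<d. \<Sum>l<d. K $$ (r, l) * (K $$ (l, m) * x m))" by (rule sum.swap)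
  also have "\<dots> = (\<Sum>m<d. (K * K) $$ (r, m) * x m)"
  proof (rule sum.cong[OF refl])
    fix m assume m: "m \<in> {..<d}"
    have "(K * K) $$ (r, m) = (\<Sum>l<d. K $$ (r, l) * K $$ (l, m))"
      using K r m by (simp add: scalar_prod_def atLeast0LessThan)
    thus "(\<Sum>l<d. K $$ (r, l) * (K $$ (l, m) * x m)) = (K * K) $$ (r, m) * x m"
      by (simp add: sum_distrib_right mult.assoc)
  qed
  also have "\<dots> = (\<Sum>m<d. (if m = r then - x m else 0))"
    by (rule sum.cong[OF refl]) (use r in \<open>auto simp: KK\<close>)
  also have "\<dots> = - x r" using r by simp
  finally show ?thesis .
qed

lemma Kap_lc: assumes K: "K \<in> carrier_mat d d" and KK: "K * K = - 1\<^sub>m d" and r: "r < d"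
  shows "Kap K d (lc K d vs a b) r = lc K d vs (\<lambda>i. - b i) a r"
proof -
  have "Kap K d (lc K d vs a b) r = (\<Sum>i<length vs. a i * Kap K d (vs!i) r + b i * Kap K d (Kap K d (vs!i)) r)"
    unfolding lc_def by (rule Kap_lin)
  also have "\<dots> = (\<Sum>i<length vs. - b i * (vs!i) r + a i * Kap K d (vs!i) r)"
    by (rule sum.cong[OF refl]) (simp add: Kap_KK[OF K KK r])
  finally show ?thesis unfolding lc_def .
qed

lemma dotp_lc: "dotp d (lc K d vs a b) u = (\<Sum>i<length vs. a i * dotp d (vs!i) u + b i * dotp d (Kap K d (vs!i)) u)"
proof -
  have "dotp d (lc K d vs a b) u = (\<Sum>r<d. \<Sum>i<length vs. (a i * (vs!i) r + b i * Kap K d (vs!i) r) * u r)"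
    unfolding dotp_def lc_def by (simp add: sum_distrib_right)
  also have "\<dots> = (\<Sum>i<length vs. \<Sum>r<d. (a i * (vs!i) r + b i * Kap K d (vs!i) r) * u r)" by (rule sum.swap)
  also have "\<dots> = (\<Sum>i<length vs. a i * dotp d (vs!i) u + b i * dotp d (Kap K d (vs!i)) u)"
    unfolding dotp_def by (simp add: sum_distrib_left sum.distrib algebra_simps)
  finally show ?thesis .
qed

lemma dotp_cong: "(\<And>r. r < d \<Longrightarrow> x r = y r) \<Longrightarrow> dotp d x u = dotp d y u"
  unfolding dotp_def by (rule sum.cong) auto

lemma sum_split_nat: "(\<Sum>c<(j::nat)+k. f c) = (\<Sum>i<j. f i) + (\<Sum>i<k. f (j + i)) "
  by (induction k) (simp_all add: add.assoc)

lemma good_bound: assumes g: "good K d vs" shows "2 * length vs \<le> d"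
proof (rule ccontr)
  let ?j = "length vs"
  assume "\<not> 2 * length vs \<le> d"
  hence lt: "d < ?j + ?j" by simp
  define N where "N = (\<lambda>r c. if c < ?j then (vs!c) r else Kap K d (vs!(c - ?j)) r)"
  obtain x where x: "\<exists>i<?j+?j. x i \<noteq> 0" "\<forall>r<d. (\<Sum>c<?j+?j. N r c * x c) = 0"
    using kernel_exists[OF lt, of N] by blast
  have "\<forall>r<d. lc K d vs x (\<lambda>i. x (?j + i)) r = 0"
  proof (intro allI impI)
    fix r assume r: "r < d"
    have "(\<Sum>c<?j+?j. N r c * x c) = (\<Sum>i<?j. N r i * x i) + (\<Sum>i<?j. N r (?j + i) * x (?j + i))"
      by (rule sum_split_nat)
    also have "\<dots> = lc K d vs x (\<lambda>i. x (?j + i)) r"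
      unfolding lc_def N_def by (simp add: sum.distrib algebra_simps)
    finally show "lc K d vs x (\<lambda>i. x (?j + i)) r = 0" using x(2) r by simp
  qed
  hence z: "\<forall>i<?j. x i = 0 \<and> x (?j + i) = 0" using g unfolding good_def by blast
  from x(1) obtain i where i: "i < ?j + ?j" "x i \<noteq> 0" by blast
  show False
  proof (cases "i < ?j")
    case True thus False using z i by simp
  next
    case False
    hence "i = ?j + (i - ?j)" "i - ?j < ?j" using i by auto
    thus False using z i by metis
  qed
qed


lemma lc_snoc: "lc K d (vs @ [w]) a b r = lc K d vs a b r + a (length vs) * w r + b (length vs) * Kap K d w r"
proof -
  have "lc K d (vs @ [w]) a b r = (\<Sum>i<Suc (length vs). a i * ((vs @ [w])!i) r + b i * Kap K d ((vs @ [w])!i) r)"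
    unfolding lc_def by simp
  also have "\<dots> = (\<Sum>i<length vs. a i * ((vs @ [w])!i) r + b i * Kap K d ((vs @ [w])!i) r)
       + (a (length vs) * w r + b (length vs) * Kap K d w r)"
    by (simp add: nth_append)
  also have "(\<Sum>i<length vs. a i * ((vs @ [w])!i) r + b i * Kap K d ((vs @ [w])!i) r) = lc K d vs a b r"
    unfolding lc_def by (rule sum.cong[OF refl]) (simp add: nth_append)
  finally show ?thesis by (simp add: add.assoc)
qed

lemma dotp_lin3: "dotp d (\<lambda>r. s r + a * u r + b * w r) x = dotp d s x + a * dotp d u x + b * dotp d w x"
  unfolding dotp_def by (simp add: sum_distrib_left sum.distrib algebra_simps)

lemma dotp_zero: "(\<And>r. r < d \<Longrightarrow> s r = 0) \<Longrightarrow> dotp d s x = 0"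
  unfolding dotp_def by (rule sum.neutral) auto

lemma good_ext: assumes K: "K \<in> carrier_mat d d" and KK: "K * K = - 1\<^sub>m d"
  and g: "good K d vs" and lt: "2 * length vs < d"
  shows "\<exists>u. good K d (vs @ [u])"
proof -
  let ?j = "length vs"
  have lt': "?j + ?j < d" using lt by simp
  define N where "N = (\<lambda>r c. if r < ?j then (vs!r) c else Kap K d (vs!(r - ?j)) c)"
  obtain w where w: "\<exists>i<d. w i \<noteq> 0" "\<forall>r<?j+?j. (\<Sum>c<d. N r c * w c) = 0"
    using kernel_exists[OF lt', of N] by blast
  have o1: "\<And>i. i < ?j \<Longrightarrow> dotp d (vs!i) w = 0"
  proof -
    fix i assume i: "i < ?j"
    have "(\<Sum>c<d. N i c * w c) = 0" using w(2) i by simp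
    thus "dotp d (vs!i) w = 0" unfolding dotp_def N_def using i by simp
  qed
  have o2: "\<And>i. i < ?j \<Longrightarrow> dotp d (Kap K d (vs!i)) w = 0"
  proof -
    fix i assume i: "i < ?j"
    have "(\<Sum>c<d. N (?j + i) c * w c) = 0" using w(2) i by simp
    thus "dotp d (Kap K d (vs!i)) w = 0" unfolding dotp_def N_def using i by simp
  qed
  have ds: "\<And>a b. dotp d (lc K d vs a b) w = 0"
    unfolding dotp_lc by (rule sum.neutral) (simp add: o1 o2)
  define p where "p = dotp d w w"
  define q where "q = dotp d (Kap K d w) w"
  have ppos: "p > 0"
  proof -
    from w(1) obtain i where i: "i < d" "w i \<noteq> 0" by blast
    have "w i * w i \<le> p" unfolding p_def dotp_def
      by (rule member_le_sum) (use i in auto)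
    moreover have "w i * w i > 0" using i(2) not_real_square_gt_zero by blast
    ultimately show ?thesis by simp
  qed
  have "good K d (vs @ [w])"
    unfolding good_def
  proof (rule allI, rule allI, rule impI)
    fix a b
    assume H: "\<forall>r<d. lc K d (vs @ [w]) a b r = 0"
    let ?s = "lc K d vs a b"
    let ?a = "a ?j" and ?b = "b ?j"
    have H': "\<And>r. r < d \<Longrightarrow> ?s r + ?a * w r + ?b * Kap K d w r = 0"
      using H lc_snoc by metis
    have E1: "?a * p + ?b * q = 0"
    proof -
      have "0 = dotp d (\<lambda>r. ?s r + ?a * w r + ?b * Kap K d w r) w"
        by (rule dotp_zero[symmetric]) (rule H')
      also have "\<dots> = ?a * p + ?b * q" unfolding dotp_lin3 ds p_def q_def by simp
      finally show ?thesis by simp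
    qed
    have E2: "?a * q - ?b * p = 0"
    proof -
      have z: "\<And>r. r < d \<Longrightarrow> Kap K d ?s r + ?a * Kap K d w r + ?b * (- w r) = 0"
      proof -
        fix r assume r: "r < d"
        have "Kap K d (\<lambda>r. ?s r + ?a * w r + ?b * Kap K d w r) r = Kap K d (\<lambda>r. 0) r"
          by (rule Kap_cong) (simp add: H')
        also have "\<dots> = 0" unfolding Kap_def by simp
        finally show "Kap K d ?s r + ?a * Kap K d w r + ?b * (- w r) = 0"
          unfolding Kap_lin3 Kap_KK[OF K KK r] .
      qed
      have "0 = dotp d (\<lambda>r. Kap K d ?s r + ?a * Kap K d w r + ?b * (- w r)) w"
        by (rule dotp_zero[symmetric]) (rule z)
      also have "\<dots> = dotp d (Kap K d ?s) w + ?a * q + ?b * dotp d (\<lambda>r. - w r) w"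
        unfolding dotp_lin3 q_def by simp
      also have "dotp d (Kap K d ?s) w = dotp d (lc K d vs (\<lambda>i. - b i) a) w"
        by (rule dotp_cong) (rule Kap_lc[OF K KK])
      also have "\<dots> = 0" by (rule ds)
      also have "dotp d (\<lambda>r. - w r) w = - p" unfolding p_def dotp_def by (simp add: sum_negf)
      finally show ?thesis by simp
    qed
    have "?a * (p * p + q * q) = p * (?a * p + ?b * q) + q * (?a * q - ?b * p)" by (simp add: algebra_simps)
    also have "\<dots> = 0" using E1 E2 by simp
    finally have "?a * (p * p + q * q) = 0" .
    moreover have "p * p + q * q > 0" using ppos by (simp add: add_pos_nonneg)
    ultimately have a0: "?a = 0" by (metis mult_eq_0_iff less_irrefl)
    hence "?b * p = 0" using E2 by simp
    hence b0: "?b = 0" using ppos by simp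
    have "\<forall>r<d. ?s r = 0" using H' a0 b0 by simp
    hence old: "\<forall>i<?j. a i = 0 \<and> b i = 0" using g unfolding good_def by blast
    show "\<forall>i<length (vs @ [w]). a i = 0 \<and> b i = 0"
    proof (intro allI impI)
      fix i assume "i < length (vs @ [w])"
      hence "i < ?j \<or> i = ?j" by auto
      thus "a i = 0 \<and> b i = 0" using old a0 b0 by auto
    qed
  qed
  thus ?thesis by blast
qed


lemma good_exists: assumes K: "K \<in> carrier_mat d d" and KK: "K * K = - 1\<^sub>m d"
  shows "j \<le> (d + 1) div 2 \<Longrightarrow> \<exists>vs. good K d vs \<and> length vs = j"
proof (induction j)
  case 0
  have "good K d []" unfolding good_def by simp
  thus ?case by blast
next
  case (Suc j)
  then obtain vs where vs: "good K d vs" "length vs = j" by auto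
  have "2 * length vs < d" using Suc(2) vs(2) by simp
  from good_ext[OF K KK vs(1) this] obtain u where "good K d (vs @ [u])" by blast
  thus ?case using vs(2) by (intro exI[of _ "vs @ [u]"]) simp
qed

lemma J_std_index: assumes l: "l < k + k" and c: "c < k + k"
  shows "J_std k $$ (l, c) = (if c < k then (if l = c + k then 1 else 0) else (if l = c - k then -1 else 0))"
  unfolding J_std_def using l c by (auto simp: index_mat_four_block)

lemma J_std_carrier: "J_std k \<in> carrier_mat (k + k) (k + k)"
  unfolding J_std_def by (rule four_block_carrier_mat) auto

lemma conj_exists: assumes K: "K \<in> carrier_mat d d" and KK: "K * K = - 1\<^sub>m d"
  shows "even d \<and> (\<exists>A. A \<in> carrier_mat d d \<and> invertible_mat A \<and> K * A = A * J_std (d div 2))"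
proof -
  define k where "k = (d + 1) div 2"
  obtain vs where vs: "good K d vs" "length vs = k" using good_exists[OF K KK, of k] k_def by auto
  have "2 * k \<le> d" using good_bound[OF vs(1)] vs(2) by simp
  hence ev: "even d" and dk: "d = k + k" unfolding k_def by presburger+
  have kd: "d div 2 = k" using dk by simp
  define A where "A = mat d d (\<lambda>(r,c). if c < k then (vs!c) r else Kap K d (vs!(c-k)) r)"
  have Ac: "A \<in> carrier_mat d d" unfolding A_def by simp
  have inj: "\<And>v. v \<in> carrier_vec d \<Longrightarrow> A *\<^sub>v v = 0\<^sub>v d \<Longrightarrow> v = 0\<^sub>v d"
  proof -
    fix v :: "real vec" assume v: "v \<in> carrier_vec d" and Av: "A *\<^sub>v v = 0\<^sub>v d"
    have "\<forall>r<d. lc K d vs (\<lambda>i. v $ i) (\<lambda>i. v $ (k + i)) r = 0"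
    proof (intro allI impI)
      fix r assume r: "r < d"
      have "0 = (A *\<^sub>v v) $ r" using Av r by simp
      also have "\<dots> = (\<Sum>c\<in>{0..<d}. A $$ (r, c) * v $ c)" using r Ac v by (simp add: scalar_prod_def)
      also have "\<dots> = (\<Sum>c<k+k. A $$ (r, c) * v $ c)" using dk by (simp add: atLeast0LessThan)
      also have "\<dots> = (\<Sum>i<k. A $$ (r, i) * v $ i) + (\<Sum>i<k. A $$ (r, k + i) * v $ (k + i))"
        by (rule sum_split_nat)
      also have "\<dots> = lc K d vs (\<lambda>i. v $ i) (\<lambda>i. v $ (k + i)) r"
        unfolding lc_def vs(2) sum.distrib[symmetric]
        by (rule sum.cong[OF refl]) (use r dk in \<open>auto simp: A_def\<close>)
      finally show "lc K d vs (\<lambda>i. v $ i) (\<lambda>i. v $ (k + i)) r = 0" by simp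
    qed
    hence z: "\<forall>i<k. v $ i = 0 \<and> v $ (k + i) = 0" using vs unfolding good_def by blast
    show "v = 0\<^sub>v d"
    proof (rule eq_vecI)
      fix i assume "i < dim_vec (0\<^sub>v d :: real vec)"
      hence i: "i < k + k" using dk by simp
      show "v $ i = 0\<^sub>v d $ i"
      proof (cases "i < k")
        case True thus ?thesis using z i dk by simp
      next
        case False
        hence "i = k + (i - k)" "i - k < k" using i by auto
        thus ?thesis using z i dk by (metis index_zero_vec(1))
      qed
    qed (use v in simp)
  qed
  have "det A \<noteq> 0"
  proof
    assume "det A = 0"
    then obtain v where "v \<in> carrier_vec d" "v \<noteq> 0\<^sub>v d" "A *\<^sub>v v = 0\<^sub>v d"
      using det_0_iff_vec_prod_zero_field[OF Ac] by blast
    thus False using inj by blast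
  qed
  hence Ainv: "invertible_mat A" by (rule det_invertible[OF Ac])
  have Jc: "J_std k \<in> carrier_mat d d" using J_std_carrier dk by simp
  have comm: "K * A = A * J_std k"
  proof (rule eq_matI)
    fix r c assume "r < dim_row (A * J_std k)" "c < dim_col (A * J_std k)"
    hence r: "r < d" and c: "c < d" using Ac Jc by auto
    have lhs: "(K * A) $$ (r, c) = Kap K d (\<lambda>l. A $$ (l, c)) r"
      using K Ac r c by (simp add: scalar_prod_def Kap_def atLeast0LessThan)
    have rhs: "(A * J_std k) $$ (r, c) = (\<Sum>l<d. A $$ (r, l) * J_std k $$ (l, c))"
      using Jc Ac r c by (simp add: scalar_prod_def atLeast0LessThan)
    show "(K * A) $$ (r, c) = (A * J_std k) $$ (r, c)"
    proof (cases "c < k")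
      case True
      have "Kap K d (\<lambda>l. A $$ (l, c)) r = Kap K d (vs!c) r"
        by (rule Kap_cong) (use True c in \<open>simp add: A_def\<close>)
      also have "\<dots> = A $$ (r, c + k)" using r c True dk by (simp add: A_def)
      also have "\<dots> = (\<Sum>l<d. if l = c + k then A $$ (r, l) else 0)" using c True dk by simp
      also have "\<dots> = (\<Sum>l<d. A $$ (r, l) * J_std k $$ (l, c))"
        by (rule sum.cong[OF refl]) (use True c dk in \<open>simp add: J_std_index\<close>)
      finally show ?thesis unfolding lhs rhs .
    next
      case False
      have "Kap K d (\<lambda>l. A $$ (l, c)) r = Kap K d (Kap K d (vs!(c-k))) r"
        by (rule Kap_cong) (use False c in \<open>simp add: A_def\<close>)
      also have "\<dots> = - (vs!(c-k)) r" by (rule Kap_KK[OF K KK r])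
      also have "\<dots> = - A $$ (r, c - k)"
      proof -
        have ck: "c - k < k" "c - k < d" using c False dk by auto
        show ?thesis using r ck by (simp add: A_def)
      qed
      also have "\<dots> = (\<Sum>l<d. if l = c - k then - A $$ (r, l) else 0)" using c False dk by simp
      also have "\<dots> = (\<Sum>l<d. A $$ (r, l) * J_std k $$ (l, c))"
        by (rule sum.cong[OF refl]) (use False c dk in \<open>simp add: J_std_index\<close>)
      finally show ?thesis unfolding lhs rhs .
    qed
  qed (use K Ac Jc in auto)
  show ?thesis using ev Ac Ainv comm kd by auto
qed

lemma sum_J_right: assumes c: "c < k + k"
  shows "(\<Sum>m<k+k. X m * J_std k $$ (m, c)) = (if c < k then X (c + k) else - X (c - k))"
proof -
  have "(\<Sum>m<k+k. X m * J_std k $$ (m, c)) = (\<Sum>m<k+k. if m = (if c < k then c + k else c - k) then (if c < k then X m else - X m) else 0)"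
    by (rule sum.cong[OF refl]) (use c in \<open>auto simp: J_std_index\<close>)
  also have "\<dots> = (if c < k then X (c + k) else - X (c - k))" using c by auto
  finally show ?thesis .
qed

lemma sum_J_left: assumes l: "l < k + k"
  shows "(\<Sum>m<k+k. J_std k $$ (l, m) * X m) = (if l < k then - X (l + k) else X (l - k))"
proof -
  have "(\<Sum>m<k+k. J_std k $$ (l, m) * X m) = (\<Sum>m<k+k. if m = (if l < k then l + k else l - k) then (if l < k then - X m else X m) else 0)"
    by (rule sum.cong[OF refl]) (use l in \<open>auto simp: J_std_index\<close>)
  also have "\<dots> = (if l < k then - X (l + k) else X (l - k))" using l by auto
  finally show ?thesis .
qed

lemma mult_index_sum: assumes "A \<in> carrier_mat n m" "B \<in> carrier_mat m p" "i < n" "j < p"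
  shows "(A * B) $$ (i, j) = (\<Sum>l<m. A $$ (i, l) * B $$ (l, j))"
  using assms by (simp add: scalar_prod_def atLeast0LessThan)

lemma J_std_sq: "J_std k * J_std k = - 1\<^sub>m (k + k)"
proof (rule eq_matI)
  fix l c assume "l < dim_row (- 1\<^sub>m (k + k) :: real mat)" "c < dim_col (- 1\<^sub>m (k + k) :: real mat)"
  hence l: "l < k + k" and c: "c < k + k" by auto
  have "(J_std k * J_std k) $$ (l, c) = (\<Sum>m<k+k. J_std k $$ (l, m) * J_std k $$ (m, c))"
    by (rule mult_index_sum[OF J_std_carrier J_std_carrier l c])
  also have "\<dots> = (if c < k then J_std k $$ (l, c + k) else - J_std k $$ (l, c - k))"
    by (rule sum_J_right[OF c])
  also have "\<dots> = (- 1\<^sub>m (k + k) :: real mat) $$ (l, c)"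
    using l c by (auto simp: J_std_index)
  finally show "(J_std k * J_std k) $$ (l, c) = (- 1\<^sub>m (k + k) :: real mat) $$ (l, c)" .
qed (use J_std_carrier in auto)

lemma realify_carrier: "Z \<in> carrier_mat k k \<Longrightarrow> realify Z \<in> carrier_mat (k + k) (k + k)"
  unfolding realify_def by (rule four_block_carrier_mat) auto

lemma realify_index: assumes Z: "Z \<in> carrier_mat k k" and l: "l < k + k" and c: "c < k + k"
  shows "realify Z $$ (l, c) = (if l < k then if c < k then Re (Z $$ (l, c)) else - Im (Z $$ (l, c - k))
     else if c < k then Im (Z $$ (l - k, c)) else Re (Z $$ (l - k, c - k)))"
  unfolding realify_def using Z l c by (auto simp: index_mat_four_block)

lemma realify_J: assumes Z: "Z \<in> carrier_mat k k"
  shows "realify Z * J_std k = J_std k * realify Z"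
proof (rule eq_matI)
  fix l c assume "l < dim_row (J_std k * realify Z)" "c < dim_col (J_std k * realify Z)"
  hence l: "l < k + k" and c: "c < k + k" using J_std_carrier[of k] realify_carrier[OF Z] by auto
  have "(realify Z * J_std k) $$ (l, c) = (\<Sum>m<k+k. realify Z $$ (l, m) * J_std k $$ (m, c))"
    by (rule mult_index_sum[OF realify_carrier[OF Z] J_std_carrier l c])
  also have "\<dots> = (if c < k then realify Z $$ (l, c + k) else - realify Z $$ (l, c - k))"
    by (rule sum_J_right[OF c])
  also have "\<dots> = (if l < k then - realify Z $$ (l + k, c) else realify Z $$ (l - k, c))"
    using l c Z by (auto simp: realify_index)
  also have "\<dots> = (\<Sum>m<k+k. J_std k $$ (l, m) * realify Z $$ (m, c))"
    by (rule sum_J_left[OF l, symmetric])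
  also have "\<dots> = (J_std k * realify Z) $$ (l, c)"
    by (rule mult_index_sum[OF J_std_carrier realify_carrier[OF Z] l c, symmetric])
  finally show "(realify Z * J_std k) $$ (l, c) = (J_std k * realify Z) $$ (l, c)" .
qed (use J_std_carrier[of k] realify_carrier[OF Z] in auto)

definition unrealify :: "nat \<Rightarrow> real mat \<Rightarrow> complex mat" where
  "unrealify k C = mat k k (\<lambda>(i, j). Complex (C $$ (i, j)) (C $$ (k + i, j)))"

lemma comm_realify: assumes C: "C \<in> carrier_mat (k + k) (k + k)" and comm: "C * J_std k = J_std k * C"
  shows "C = realify (unrealify k C)" "unrealify k C \<in> carrier_mat k k"
proof -
  let ?Z = "unrealify k C"
  show Zc: "?Z \<in> carrier_mat k k" unfolding unrealify_def by simp
  have e: "\<And>l c. l < k + k \<Longrightarrow> c < k + k \<Longrightarrow>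
     (if c < k then C $$ (l, c + k) else - C $$ (l, c - k)) = (if l < k then - C $$ (l + k, c) else C $$ (l - k, c))"
  proof -
    fix l c assume l: "l < k + k" and c: "c < k + k"
    have "(C * J_std k) $$ (l, c) = (J_std k * C) $$ (l, c)" using comm by simp
    thus "(if c < k then C $$ (l, c + k) else - C $$ (l, c - k)) = (if l < k then - C $$ (l + k, c) else C $$ (l - k, c))"
      unfolding mult_index_sum[OF C J_std_carrier l c] mult_index_sum[OF J_std_carrier C l c]
        sum_J_right[OF c] sum_J_left[OF l] .
  qed
  show "C = realify ?Z"
  proof (rule eq_matI)
    fix l c assume "l < dim_row (realify ?Z)" "c < dim_col (realify ?Z)"
    hence l: "l < k + k" and c: "c < k + k" using realify_carrier[OF Zc] by auto
    show "C $$ (l, c) = realify ?Z $$ (l, c)"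
    proof (cases "l < k")
      case lt: True
      show ?thesis
      proof (cases "c < k")
        case True thus ?thesis using lt l c unfolding realify_index[OF Zc l c] by (simp add: unrealify_def)
      next
        case False
        have c': "c - k < k + k" using c by simp
        have ck: "c - k < k" "c - k + k = c" using c False by auto
        have "C $$ (l, c - k + k) = - C $$ (l + k, c - k)" using e[OF l c'] lt ck(1) by simp
        hence "C $$ (l, c) = - C $$ (k + l, c - k)" using False by (simp add: add.commute)
        thus ?thesis using lt False l c unfolding realify_index[OF Zc l c] by (simp add: unrealify_def add.commute)
      qed
    next
      case ge: False
      show ?thesis
      proof (cases "c < k")
        case True thus ?thesis using ge l c unfolding realify_index[OF Zc l c] by (simp add: unrealify_def)
      next
        case False
        have c': "c - k < k + k" using c by simp
        have ck: "c - k < k" "c - k + k = c" using c False by auto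
        have b: "C $$ (l, c - k + k) = C $$ (l - k, c - k)" using e[OF l c'] ge ck(1) by simp
        have "C $$ (l, c) = C $$ (l - k, c - k)" using b ck by simp
        thus ?thesis using ge False l c unfolding realify_index[OF Zc l c] by (simp add: unrealify_def)
      qed
    qed
  qed (use C realify_carrier[OF Zc] in auto)
qed

lemma idx_mm: assumes A: "A \<in> carrier_mat k k" and B: "B \<in> carrier_mat k k" and i: "i < k" and j: "j < k"
  shows "(map_mat f A * map_mat g B) $$ (i, j) = (\<Sum>m<k. f (A $$ (i, m)) * g (B $$ (m, j)))"
proof -
  have c: "map_mat f A \<in> carrier_mat k k" "map_mat g B \<in> carrier_mat k k" using A B by auto
  show ?thesis unfolding mult_index_sum[OF c i j]
    by (rule sum.cong[OF refl]) (use A B i j in auto)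
qed

lemma blk: fixes Z W :: "complex mat" and f g f' g' :: "complex \<Rightarrow> real"
  assumes Z: "Z \<in> carrier_mat k k" and W: "W \<in> carrier_mat k k"
  shows "map_mat f Z * map_mat g W + map_mat f' Z * map_mat g' W
     = mat k k (\<lambda>(i,j). \<Sum>m<k. f (Z $$ (i,m)) * g (W $$ (m,j)) + f' (Z $$ (i,m)) * g' (W $$ (m,j)))"
proof (rule eq_matI)
  fix i j assume "i < dim_row (mat k k (\<lambda>(i,j). \<Sum>m<k. f (Z $$ (i,m)) * g (W $$ (m,j)) + f' (Z $$ (i,m)) * g' (W $$ (m,j))) :: real mat)"
    "j < dim_col (mat k k (\<lambda>(i,j). \<Sum>m<k. f (Z $$ (i,m)) * g (W $$ (m,j)) + f' (Z $$ (i,m)) * g' (W $$ (m,j))) :: real mat)"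
  hence i: "i < k" and j: "j < k" by auto
  have c: "map_mat f Z * map_mat g W \<in> carrier_mat k k" "map_mat f' Z * map_mat g' W \<in> carrier_mat k k"
    using Z W by auto
  have "(map_mat f Z * map_mat g W + map_mat f' Z * map_mat g' W) $$ (i, j)
      = (map_mat f Z * map_mat g W) $$ (i, j) + (map_mat f' Z * map_mat g' W) $$ (i, j)"
    by (rule index_add_mat(1)) (use c i j in auto)
  also have "\<dots> = (\<Sum>m<k. f (Z $$ (i,m)) * g (W $$ (m,j))) + (\<Sum>m<k. f' (Z $$ (i,m)) * g' (W $$ (m,j)))"
    unfolding idx_mm[OF Z W i j] idx_mm[OF Z W i j] ..
  also have "\<dots> = mat k k (\<lambda>(i,j). \<Sum>m<k. f (Z $$ (i,m)) * g (W $$ (m,j)) + f' (Z $$ (i,m)) * g' (W $$ (m,j))) $$ (i, j)"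
    using i j by (simp add: sum.distrib)
  finally show "(map_mat f Z * map_mat g W + map_mat f' Z * map_mat g' W) $$ (i, j) = mat k k (\<lambda>(i,j). \<Sum>m<k. f (Z $$ (i,m)) * g (W $$ (m,j)) + f' (Z $$ (i,m)) * g' (W $$ (m,j))) $$ (i, j)" .
qed (use Z W in auto)

lemma realify_mult: assumes Z: "Z \<in> carrier_mat k k" and W: "W \<in> carrier_mat k k"
  shows "realify (Z * W) = realify Z * realify W"
proof -
  have nI: "\<And>X :: complex mat. - map_mat Im X = map_mat (\<lambda>x. - Im x) X"
    by (rule eq_matI) auto
  have c: "map_mat Re Z \<in> carrier_mat k k" "map_mat Im Z \<in> carrier_mat k k"
    "map_mat Re W \<in> carrier_mat k k" "map_mat Im W \<in> carrier_mat k k"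
    "map_mat (\<lambda>x. - Im x) Z \<in> carrier_mat k k" "map_mat (\<lambda>x. - Im x) W \<in> carrier_mat k k" using Z W by auto
  have ZW: "\<And>i j. i < k \<Longrightarrow> j < k \<Longrightarrow> (Z * W) $$ (i, j) = (\<Sum>m<k. Z $$ (i, m) * W $$ (m, j))"
    by (rule mult_index_sum[OF Z W])
  have re: "\<And>i j. i < k \<Longrightarrow> j < k \<Longrightarrow> Re ((Z * W) $$ (i, j)) = (\<Sum>m<k. Re (Z $$ (i, m)) * Re (W $$ (m, j)) + - Im (Z $$ (i, m)) * Im (W $$ (m, j)))"
    unfolding ZW Re_sum by simp
  have im: "\<And>i j. i < k \<Longrightarrow> j < k \<Longrightarrow> Im ((Z * W) $$ (i, j)) = (\<Sum>m<k. Im (Z $$ (i, m)) * Re (W $$ (m, j)) + Re (Z $$ (i, m)) * Im (W $$ (m, j)))"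
    unfolding ZW Im_sum by (simp add: algebra_simps)
  have "realify Z * realify W = four_block_mat
      (map_mat Re Z * map_mat Re W + map_mat (\<lambda>x. - Im x) Z * map_mat Im W)
      (map_mat Re Z * map_mat (\<lambda>x. - Im x) W + map_mat (\<lambda>x. - Im x) Z * map_mat Re W)
      (map_mat Im Z * map_mat Re W + map_mat Re Z * map_mat Im W)
      (map_mat Im Z * map_mat (\<lambda>x. - Im x) W + map_mat Re Z * map_mat Re W)"
    unfolding realify_def nI by (rule mult_four_block_mat) (use c in auto)
  also have "\<dots> = realify (Z * W)"
    unfolding realify_def nI blk[OF Z W]
  proof (rule cong_four_block_mat)
    show "mat k k (\<lambda>(i, j). \<Sum>m<k. Re (Z $$ (i, m)) * Re (W $$ (m, j)) + - Im (Z $$ (i, m)) * Im (W $$ (m, j))) = map_mat Re (Z * W)"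
      by (rule eq_matI) (use Z W in \<open>simp_all add: re del: index_mult_mat(1)\<close>)
    show "mat k k (\<lambda>(i, j). \<Sum>m<k. Re (Z $$ (i, m)) * - Im (W $$ (m, j)) + - Im (Z $$ (i, m)) * Re (W $$ (m, j))) = map_mat (\<lambda>x. - Im x) (Z * W)"
      by (rule eq_matI) (use Z W in \<open>simp_all add: im sum_negf[symmetric] algebra_simps del: index_mult_mat(1)\<close>)
    show "mat k k (\<lambda>(i, j). \<Sum>m<k. Im (Z $$ (i, m)) * Re (W $$ (m, j)) + Re (Z $$ (i, m)) * Im (W $$ (m, j))) = map_mat Im (Z * W)"
      by (rule eq_matI) (use Z W in \<open>simp_all add: im del: index_mult_mat(1)\<close>)
    show "mat k k (\<lambda>(i, j). \<Sum>m<k. Im (Z $$ (i, m)) * - Im (W $$ (m, j)) + Re (Z $$ (i, m)) * Re (W $$ (m, j))) = map_mat Re (Z * W)"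
      by (rule eq_matI) (use Z W in \<open>simp_all add: re algebra_simps del: index_mult_mat(1)\<close>)
  qed
  finally show ?thesis by simp
qed

lemma realify_one: "realify (1\<^sub>m k) = 1\<^sub>m (k + k)"
proof (rule eq_matI)
  fix l c assume "l < dim_row (1\<^sub>m (k + k) :: real mat)" "c < dim_col (1\<^sub>m (k + k) :: real mat)"
  hence l: "l < k + k" and c: "c < k + k" by auto
  show "realify (1\<^sub>m k) $$ (l, c) = 1\<^sub>m (k + k) $$ (l, c)"
    unfolding realify_index[OF one_carrier_mat l c] using l c by auto
qed (use realify_carrier[OF one_carrier_mat, of k] in auto)

lemma realify_inj: assumes Z: "Z \<in> carrier_mat k k" and W: "W \<in> carrier_mat k k"
  and eq: "realify Z = realify W" shows "Z = W"
proof (rule eq_matI)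
  fix i j assume "i < dim_row W" "j < dim_col W"
  hence i: "i < k" and j: "j < k" using W by auto
  have l1: "i < k + k" "j < k + k" and l2: "k + i < k + k" using i j by auto
  have "realify Z $$ (i, j) = realify W $$ (i, j)" using eq by simp
  hence re: "Re (Z $$ (i, j)) = Re (W $$ (i, j))"
    unfolding realify_index[OF Z l1] realify_index[OF W l1] using i j by simp
  have "realify Z $$ (k + i, j) = realify W $$ (k + i, j)" using eq by simp
  hence im: "Im (Z $$ (i, j)) = Im (W $$ (i, j))"
    unfolding realify_index[OF Z l2 l1(2)] realify_index[OF W l2 l1(2)] using i j by simp
  show "Z $$ (i, j) = W $$ (i, j)" using re im by (rule complex_eqI)
qed (use Z W in auto)

lemma assoc_dim: "dim_col (A :: 'a :: semiring_0 mat) = dim_row B \<Longrightarrow> dim_col B = dim_row C \<Longrightarrow> A * B * C = A * (B * C)"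
  by (rule assoc_mult_mat[of A "dim_row A" "dim_col A" B "dim_col B" C "dim_col C"]) auto

lemma cancel_l: fixes A B Y :: "'a :: comm_ring_1 mat"
  assumes A: "A \<in> carrier_mat n n" and B: "B \<in> carrier_mat n n" and BA: "B * A = 1\<^sub>m n"
  and Y: "dim_row Y = n" shows "B * (A * Y) = Y"
proof -
  have Yc: "Y \<in> carrier_mat n (dim_col Y)" using Y by auto
  have "B * (A * Y) = (B * A) * Y" using A B Yc by simp
  also have "\<dots> = Y" using BA Y by (simp add: left_mult_one_mat')
  finally show ?thesis .
qed

lemma conj_sq: assumes A: "A \<in> carrier_mat (k + k) (k + k)" and inv: "invertible_mat A"
  shows "A * J_std k * mat_inv A * (A * J_std k * mat_inv A) = - 1\<^sub>m (k + k)"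
proof -
  note mi = mat_inv_props[OF A inv]
  have J: "J_std k \<in> carrier_mat (k + k) (k + k)" by (rule J_std_carrier)
  note cl = cancel_l[OF A mi(1) mi(3)]
  have "A * J_std k * mat_inv A * (A * J_std k * mat_inv A) = A * (J_std k * J_std k) * mat_inv A"
    using A J mi by (simp add: cl assoc_dim)
  also have "\<dots> = - (A * mat_inv A)" using A J mi unfolding J_std_sq by (simp add: assoc_dim)
  also have "\<dots> = - 1\<^sub>m (k + k)" using mi by simp
  finally show ?thesis .
qed

lemma fiber: assumes A: "A \<in> carrier_mat (k + k) (k + k)" and iA: "invertible_mat A"
  and B: "B \<in> carrier_mat (k + k) (k + k)" and iB: "invertible_mat B"
  shows "A * J_std k * mat_inv A = B * J_std k * mat_inv B \<longleftrightarrow> (\<exists>Z\<in>GL_complex k. B = A * realify Z)"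
proof -
  note mA = mat_inv_props[OF A iA] and mB = mat_inv_props[OF B iB]
  have J: "J_std k \<in> carrier_mat (k + k) (k + k)" by (rule J_std_carrier)
  note clA = cancel_l[OF A mA(1) mA(3)] and crA = cancel_l[OF mA(1) A mA(2)]
  note clB = cancel_l[OF B mB(1) mB(3)] and crB = cancel_l[OF mB(1) B mB(2)]
  let ?J = "J_std k" and ?Ai = "mat_inv A" and ?Bi = "mat_inv B"
  show ?thesis
  proof
    assume X: "A * ?J * ?Ai = B * ?J * ?Bi"
    define C where "C = ?Ai * B"
    have Cc: "C \<in> carrier_mat (k + k) (k + k)" unfolding C_def using mA B by auto
    have "J_std k * C = ?Ai * (A * ?J * ?Ai) * B"
      unfolding C_def using A B J mA by (simp add: assoc_dim clA)
    also have "\<dots> = ?Ai * (B * ?J * ?Bi) * B" unfolding X ..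
    also have "\<dots> = C * ?J"
      unfolding C_def using A B J mA mB by (simp add: assoc_dim)
    finally have comm: "C * ?J = ?J * C" by simp
    note ZC = comm_realify[OF Cc comm]
    define Z where "Z = unrealify k C"
    have Zc: "Z \<in> carrier_mat k k" and CZ: "C = realify Z" using ZC unfolding Z_def by auto
    define D where "D = ?Bi * A"
    have Dc: "D \<in> carrier_mat (k + k) (k + k)" unfolding D_def using mB A by auto
    have DC: "D * C = 1\<^sub>m (k + k)" unfolding D_def C_def using A B mA mB by (simp add: assoc_dim crA)
    have CD: "C * D = 1\<^sub>m (k + k)" unfolding D_def C_def using A B mA mB by (simp add: assoc_dim crB)
    note clD = cancel_l[OF Cc Dc DC]
    have "D * ?J = D * (?J * C) * D" using Dc Cc J CD by (simp add: assoc_dim)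
    also have "\<dots> = D * (C * ?J) * D" unfolding comm ..
    also have "\<dots> = ?J * D" using Dc Cc J by (simp add: assoc_dim clD)
    finally have commD: "D * ?J = ?J * D" .
    note WD = comm_realify[OF Dc commD]
    define W where "W = unrealify k D"
    have Wc: "W \<in> carrier_mat k k" and DW: "D = realify W" using WD unfolding W_def by auto
    have "realify (Z * W) = realify (1\<^sub>m k)"
      unfolding realify_mult[OF Zc Wc] realify_one using CD CZ DW by simp
    hence ZW: "Z * W = 1\<^sub>m k" by (rule realify_inj[OF mult_carrier_mat[OF Zc Wc] one_carrier_mat])
    have "invertible_mat Z" by (rule invertibleI[OF Zc Wc ZW])
    hence ZG: "Z \<in> GL_complex k" unfolding GL_complex_def using Zc by simp
    have "B = A * C" unfolding C_def using B by (simp add: crA)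
    thus "\<exists>Z\<in>GL_complex k. B = A * realify Z" using ZG CZ by blast
  next
    assume "\<exists>Z\<in>GL_complex k. B = A * realify Z"
    then obtain Z where Zc: "Z \<in> carrier_mat k k" and BZ: "B = A * realify Z"
      unfolding GL_complex_def by auto
    have R: "realify Z \<in> carrier_mat (k + k) (k + k)" by (rule realify_carrier[OF Zc])
    have XB: "A * ?J * ?Ai * B = B * ?J"
      unfolding BZ using A J mA R by (simp add: assoc_dim clA realify_J[OF Zc])
    have "B * ?J * ?Bi = A * ?J * ?Ai * B * ?Bi" unfolding XB ..
    also have "\<dots> = A * ?J * ?Ai" using A J mA B mB by (simp add: assoc_dim)
    finally show "A * ?J * ?Ai = B * ?J * ?Bi" by simp
  qed
qed

lemma Kmat_sq: assumes b: "bij_betw e {0..<(d::nat)} C"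
  and sq: "\<forall>i\<in>C. \<forall>k\<in>C. (\<Sum>j\<in>C. K i j * K j k) = (if i = k then -1 else (0::real))"
  shows "mat d d (\<lambda>(p,q). K (e p) (e q)) * mat d d (\<lambda>(p,q). K (e p) (e q)) = - 1\<^sub>m d"
proof (rule eq_matI)
  let ?K = "mat d d (\<lambda>(p,q). K (e p) (e q))"
  have Kc: "?K \<in> carrier_mat d d" by simp
  fix p q assume "p < dim_row (- 1\<^sub>m d :: real mat)" "q < dim_col (- 1\<^sub>m d :: real mat)"
  hence p: "p < d" and q: "q < d" by auto
  have "(?K * ?K) $$ (p, q) = (\<Sum>l<d. ?K $$ (p, l) * ?K $$ (l, q))" by (rule mult_index_sum[OF Kc Kc p q])
  also have "\<dots> = (\<Sum>l\<in>{0..<d}. K (e p) (e l) * K (e l) (e q))"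
    by (simp add: atLeast0LessThan p q)
  also have "\<dots> = (\<Sum>j\<in>C. K (e p) j * K j (e q))"
    by (rule sum.reindex_bij_betw[OF b])
  also have "\<dots> = (if e p = e q then -1 else 0)" using sq tr_e(2)[OF b p] tr_e(2)[OF b q] by blast
  also have "\<dots> = (- 1\<^sub>m d :: real mat) $$ (p, q)"
  proof -
    have "e p = e q \<longleftrightarrow> p = q" using tr_e(1)[OF b p] tr_e(1)[OF b q] by metis
    thus ?thesis using p q by simp
  qed
  finally show "(?K * ?K) $$ (p, q) = (- 1\<^sub>m d :: real mat) $$ (p, q)" .
qed auto

lemma class_fin: "finite (M_class M chi (a :: 'r :: finite))" by simp
lemma class_self: "a \<in> M_class M chi a" by (simp add: in_class equiv_refl)

lemma J_std_sq_idx: assumes b: "bij_betw e {0..<(h + h)} C" and i: "i \<in> C" and k: "k \<in> C"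
  shows "(\<Sum>j\<in>C. transport e (h + h) (J_std h) i j * transport e (h + h) (J_std h) j k) = (if i = k then -1 else 0)"
proof -
  let ?g = "the_inv_into {0..<h + h} e"
  have "(\<Sum>j\<in>C. transport e (h + h) (J_std h) i j * transport e (h + h) (J_std h) j k) = (J_std h * J_std h) $$ (?g i, ?g k)"
    by (rule tr_sum[OF b J_std_carrier J_std_carrier i k])
  also have "\<dots> = (- 1\<^sub>m (h + h) :: real mat) $$ (?g i, ?g k)" unfolding J_std_sq ..
  also have "\<dots> = (if ?g i = ?g k then -1 else 0)" using tr_inv(1)[OF b i] tr_inv(1)[OF b k] by simp
  also have "(?g i = ?g k) = (i = k)" using tr_inv(2)[OF b i] tr_inv(2)[OF b k] by metis
  finally show ?thesis .
qed

lemma even_of_exists: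
  fixes chi :: "'m \<Rightarrow> 'r::finite \<Rightarrow> real"
  assumes signs: "\<forall>m\<in>M. \<forall>a. chi m a = 1 \<or> chi m a = -1"
  and ex: "\<exists>J. complex_structure J \<and> M_invariant M chi J"
  shows "even (card (M_class M chi a))"
proof -
  obtain J where "complex_structure J \<and> M_invariant M chi J" using ex by blast
  hence ds: "direct_sum_of_class_cs M chi J" using dsum_iff[OF signs] by blast
  let ?C = "M_class M chi a"
  obtain e where b: "bij_betw e {0..<card ?C} ?C" using ex_bij_betw_nat_finite[OF class_fin] by blast
  have sq: "\<forall>i\<in>?C. \<forall>k\<in>?C. (\<Sum>j\<in>?C. J i j * J j k) = (if i = k then -1 else 0)"
    using ds unfolding direct_sum_of_class_cs_def by blast
  have "mat (card ?C) (card ?C) (\<lambda>(p,q). J (e p) (e q)) * mat (card ?C) (card ?C) (\<lambda>(p,q). J (e p) (e q)) = - 1\<^sub>m (card ?C)"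
    by (rule Kmat_sq[OF b sq])
  from conj_exists[OF _ this] show ?thesis by simp
qed

lemma exists_of_even:
  fixes chi :: "'m \<Rightarrow> 'r::finite \<Rightarrow> real"
  assumes signs: "\<forall>m\<in>M. \<forall>a. chi m a = 1 \<or> chi m a = -1"
  and ev: "\<forall>a. even (card (M_class M chi a))"
  shows "\<exists>J. complex_structure J \<and> M_invariant M chi J"
proof -
  define E where "E = (\<lambda>C. SOME e. bij_betw e {0..<card C} (C :: 'r set))"
  have Eb: "\<And>a. bij_betw (E (M_class M chi a)) {0..<card (M_class M chi a)} (M_class M chi a)"
    unfolding E_def by (rule someI_ex[OF ex_bij_betw_nat_finite[OF class_fin]])
  define T where "T = (\<lambda>C. transport (E C) (card C) (J_std (card C div 2)))"
  define J where "J = (\<lambda>i j. if M_equiv M chi i j then T (M_class M chi j) i j else 0)"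
  have "direct_sum_of_class_cs M chi J"
    unfolding direct_sum_of_class_cs_def
  proof (intro conjI allI impI ballI)
    fix i j assume "\<not> M_equiv M chi i j" thus "J i j = 0" unfolding J_def by simp
  next
    fix a i k assume i: "i \<in> M_class M chi a" and k: "k \<in> M_class M chi a"
    let ?C = "M_class M chi a"
    obtain h where h: "card ?C = h + h" using ev by (metis evenE mult_2)
    have hd: "(h + h) div 2 = h" by simp
    have b: "bij_betw (E ?C) {0..<h + h} ?C" using Eb[of a] h by simp
    have "(\<Sum>j\<in>?C. J i j * J j k) = (\<Sum>j\<in>?C. T ?C i j * T ?C j k)"
    proof (rule sum.cong[OF refl])
      fix j assume j: "j \<in> ?C"
      have ij: "M_equiv M chi i j" using i j by (simp add: in_class) (metis equiv_sym equiv_trans)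
      have jk: "M_equiv M chi j k" using k j by (simp add: in_class) (metis equiv_sym equiv_trans)
      show "J i j * J j k = T ?C i j * T ?C j k"
        unfolding J_def using ij jk class_eq[OF j] class_eq[OF k] by simp
    qed
    also have "\<dots> = (if i = k then -1 else 0)"
      unfolding T_def h hd by (rule J_std_sq_idx[OF b i k])
    finally show "(\<Sum>j\<in>?C. J i j * J j k) = (if i = k then -1 else 0)" .
  qed
  thus ?thesis using dsum_iff[OF signs] by blast
qed

lemma sq_idx: assumes b: "bij_betw e {0..<(d::nat)} C" and X: "X \<in> carrier_mat d d" and XX: "X * X = - 1\<^sub>m d"
  and i: "i \<in> C" and k: "k \<in> C"
  shows "(\<Sum>j\<in>C. transport e d X i j * transport e d X j k) = (if i = k then -1 else 0)"
proof -
  let ?g = "the_inv_into {0..<d} e"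
  have "(\<Sum>j\<in>C. transport e d X i j * transport e d X j k) = (X * X) $$ (?g i, ?g k)"
    by (rule tr_sum[OF b X X i k])
  also have "\<dots> = (- 1\<^sub>m d :: real mat) $$ (?g i, ?g k)" unfolding XX ..
  also have "\<dots> = (if ?g i = ?g k then -1 else 0)" using tr_inv(1)[OF b i] tr_inv(1)[OF b k] by simp
  also have "(?g i = ?g k) = (i = k)" using tr_inv(2)[OF b i] tr_inv(2)[OF b k] by metis
  finally show ?thesis .
qed

lemma param_part:
  fixes chi :: "'m \<Rightarrow> 'r::finite \<Rightarrow> real"
  assumes b: "bij_betw e {0..<h + h} (M_class M chi a)"
  shows "param e (h + h) ` GL_real (h + h) = class_cs M chi (M_class M chi a)
    \<and> (\<forall>A\<in>GL_real (h + h). \<forall>B\<in>GL_real (h + h).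
         param e (h + h) A = param e (h + h) B \<longleftrightarrow> (\<exists>Z\<in>GL_complex ((h + h) div 2). B = A * realify Z))"
proof -
  let ?C = "M_class M chi a" and ?d = "h + h"
  have hd: "(h + h) div 2 = h" by simp
  have pe: "\<And>A. param e ?d A = transport e ?d (A * J_std h * mat_inv A)" unfolding param_def hd ..
  have Xc: "\<And>A. A \<in> GL_real ?d \<Longrightarrow> A * J_std h * mat_inv A \<in> carrier_mat ?d ?d"
  proof -
    fix A assume "A \<in> GL_real ?d"
    hence A: "A \<in> carrier_mat ?d ?d" "invertible_mat A" unfolding GL_real_def by auto
    show "A * J_std h * mat_inv A \<in> carrier_mat ?d ?d" using A mat_inv_props[OF A] J_std_carrier[of h] by auto
  qed
  have sub: "param e ?d ` GL_real ?d \<subseteq> class_cs M chi ?C"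
  proof
    fix K assume "K \<in> param e ?d ` GL_real ?d"
    then obtain A where AG: "A \<in> GL_real ?d" and K: "K = param e ?d A" by blast
    hence A: "A \<in> carrier_mat ?d ?d" "invertible_mat A" unfolding GL_real_def by auto
    let ?X = "A * J_std h * mat_inv A"
    have XX: "?X * ?X = - 1\<^sub>m ?d" by (rule conj_sq[OF A])
    show "K \<in> class_cs M chi ?C"
      unfolding class_cs_def
    proof (intro CollectI conjI allI impI ballI)
      fix i j assume "i \<notin> ?C \<or> j \<notin> ?C"
      thus "K i j = 0" unfolding K pe by (rule tr_out[OF b])
    next
      fix i k assume i: "i \<in> ?C" and k: "k \<in> ?C"
      show "(\<Sum>j\<in>?C. K i j * K j k) = (if i = k then -1 else 0)"
        unfolding K pe by (rule sq_idx[OF b Xc[OF AG] XX i k])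
    next
      fix m i k assume m: "m \<in> M" and i: "i \<in> ?C" and k: "k \<in> ?C"
      have "chi m i = chi m k" using m i k by (simp add: in_class M_equiv_def)
      thus "K i k * chi m k = chi m i * K i k" by simp
    qed
  qed
  have sup: "class_cs M chi ?C \<subseteq> param e ?d ` GL_real ?d"
  proof
    fix K assume K: "K \<in> class_cs M chi ?C"
    have z: "\<forall>i j. (i \<notin> ?C \<or> j \<notin> ?C) \<longrightarrow> K i j = 0" using K unfolding class_cs_def by blast
    have sq: "\<forall>i\<in>?C. \<forall>k\<in>?C. (\<Sum>j\<in>?C. K i j * K j k) = (if i = k then -1 else 0)"
      using K unfolding class_cs_def by blast
    let ?K = "mat ?d ?d (\<lambda>(p,q). K (e p) (e q))"
    have Kc: "?K \<in> carrier_mat ?d ?d" by simp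
    have KK: "?K * ?K = - 1\<^sub>m ?d" by (rule Kmat_sq[OF b sq])
    obtain A where A: "A \<in> carrier_mat ?d ?d" "invertible_mat A" "?K * A = A * J_std h"
      using conj_exists[OF Kc KK] hd by auto
    note mA = mat_inv_props[OF A(1,2)]
    have "A * J_std h * mat_inv A = ?K * A * mat_inv A" unfolding A(3) ..
    also have "\<dots> = ?K" using Kc A(1) mA by (simp add: assoc_dim)
    finally have "param e ?d A = K" unfolding pe using tr_back[OF b z] by simp
    moreover have "A \<in> GL_real ?d" unfolding GL_real_def using A by simp
    ultimately show "K \<in> param e ?d ` GL_real ?d" by blast
  qed
  have fib: "\<forall>A\<in>GL_real ?d. \<forall>B\<in>GL_real ?d.
         param e ?d A = param e ?d B \<longleftrightarrow> (\<exists>Z\<in>GL_complex h. B = A * realify Z)"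
  proof (intro ballI)
    fix A B assume AG: "A \<in> GL_real ?d" and BG: "B \<in> GL_real ?d"
    hence A: "A \<in> carrier_mat ?d ?d" "invertible_mat A" and B: "B \<in> carrier_mat ?d ?d" "invertible_mat B"
      unfolding GL_real_def by auto
    have "param e ?d A = param e ?d B \<longleftrightarrow> A * J_std h * mat_inv A = B * J_std h * mat_inv B"
      unfolding pe using tr_inj[OF b Xc[OF AG] Xc[OF BG]] by metis
    also have "\<dots> \<longleftrightarrow> (\<exists>Z\<in>GL_complex h. B = A * realify Z)" by (rule fiber[OF A B])
    finally show "param e ?d A = param e ?d B \<longleftrightarrow> (\<exists>Z\<in>GL_complex h. B = A * realify Z)" .
  qed
  show ?thesis using sub sup fib hd by auto
qed

theorem proposition1:
  fixes M :: "'m set" and chi :: "'m \<Rightarrow> 'r::finite \<Rightarrow> real"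
  assumes signs: "\<forall>m\<in>M. \<forall>a. chi m a = 1 \<or> chi m a = -1"
  shows "((\<exists>J. complex_structure J \<and> M_invariant M chi J)
            \<longleftrightarrow> (\<forall>a. even (card (M_class M chi a))))
       \<and> ((\<forall>a. even (card (M_class M chi a))) \<longrightarrow>
            (\<forall>J. (complex_structure J \<and> M_invariant M chi J) \<longleftrightarrow> direct_sum_of_class_cs M chi J)
          \<and> (\<forall>a e. bij_betw e {0..<card (M_class M chi a)} (M_class M chi a) \<longrightarrow>
               (let C = M_class M chi a; d = card C in
                 param e d ` GL_real d = class_cs M chi C
               \<and> (\<forall>A\<in>GL_real d. \<forall>B\<in>GL_real d.
                    param e d A = param e d B \<longleftrightarrow> (\<exists>Z\<in>GL_complex (d div 2). B = A * realify Z)))))"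
proof (intro conjI impI allI)
  show "(\<exists>J. complex_structure J \<and> M_invariant M chi J) \<longleftrightarrow> (\<forall>a. even (card (M_class M chi a)))"
    using even_of_exists[OF signs] exists_of_even[OF signs] by blast
next
  fix J
  show "(complex_structure J \<and> M_invariant M chi J) \<longleftrightarrow> direct_sum_of_class_cs M chi J"
    by (rule dsum_iff[OF signs])
next
  fix a e
  assume ev: "\<forall>a. even (card (M_class M chi a))"
    and b: "bij_betw e {0..<card (M_class M chi a)} (M_class M chi a)"
  obtain h where h: "card (M_class M chi a) = h + h" using ev by (metis evenE mult_2)
  have b': "bij_betw e {0..<h + h} (M_class M chi a)" using b h by simp
  show "let C = M_class M chi a; d = card C in
                 param e d ` GL_real d = class_cs M chi C
               \<and> (\<forall>A\<in>GL_real d. \<forall>B\<in>GL_real d.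
                    param e d A = param e d B \<longleftrightarrow> (\<exists>Z\<in>GL_complex (d div 2). B = A * realify Z))"
    unfolding Let_def h by (rule param_part[OF b'])
qed

end
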